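(* Consider the following two-stage game between Alice (A) and Bob (B). $X_1^A,X_1^B$ are independent and uniform on $\{-1,+1\}$; $X_2=X_1^B$. At stage 1 only Bob acts, choosing $U_1^B\in\{-1,+1\}$ knowing $H_1^B=X_1^B$ (Alice knows $H_1^A=X_1^A$). At stage 2 Alice and Bob act simultaneously, choosing $U_2^A,U_2^B\in\{-1,0,+1\}$, with information $H_2^A=(X_1^A,U_1^B)$ and $H_2^B=(X_1^B,U_1^B)$. Rewards: $R_1^A=-1$ if $U_1^B=-1$ and $0$ otherwise; $R_2^A=1$ if $U_2^A=X_2$ or $U_2^A=0$, and $0$ otherwise; $R_1^B=0.2$ if $U_1^B=-1$ and $0$ otherwise; $R_2^B=-1$ if $U_2^A=U_2^B$ and $0$ otherwise; total payoffs are $R_1^i+R_2^i$. Let $K_1^A=X_1^A$, $K_2^A=U_1^B$, and $K_t^B=H_t^B$ for $t=1,2$. Then the set of expected payoff profiles of weak perfect Bayesian equilibria whose strategy profile is $K$-based (i.e. Alice's stage-2 mixed action depends only on $U_1^B$) is a proper subset of the set of expected payoff profiles of all weak perfect Bayesian equilibria.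
   Context: A behavioral strategy of a player maps each of that player's information realizations to a distribution over actions. An assessment $(g,\mu)$ consists of a behavioral strategy profile $g$ and a belief system $\mu$ assigning to each information set of each player a probability distribution over the nodes (complete histories of moves of nature and players) in that information set. $(g,\mu)$ is a weak perfect Bayesian equilibrium (wPBE) if (i) $g$ is sequentially rational given $\mu$: at every information set of every player, the player's continuation strategy maximizes their expected continuation payoff computed with belief $\mu$ over nodes and the others' strategies $g$; and (ii) at every information set reached with positive probability under $g$, $\mu$ is obtained from $g$ by Bayes' rule (no restriction off the equilibrium path). *)

theory Defs
  imports Complex_Main
begin

text \<open>The two-stage game of Alice and Bob.  Binary values (X_1^A, X_1^B, U_1^B) are
  integers in S1 = {-1,1}; stage-2 actions are in S2 = {-1,0,1}.  X_2 = X_1^B.\<close>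

definition S1 :: "int set" where "S1 = {-1, 1}"
definition S2 :: "int set" where "S2 = {-1, 0, 1}"

definition is_dist :: "int set \<Rightarrow> (int \<Rightarrow> real) \<Rightarrow> bool" where
  "is_dist A p \<longleftrightarrow> (\<forall>v\<in>A. 0 \<le> p v) \<and> (\<Sum>v\<in>A. p v) = 1"

text \<open>Alice's behavioral strategy: a xa u v = probability of U_2^A = v given H_2^A = (xa,u).
  (Alice has no action at stage 1.)\<close>
type_synonym alice_strat = "int \<Rightarrow> int \<Rightarrow> int \<Rightarrow> real"

text \<open>Bob's behavioral strategy: b1 xb u = probability of U_1^B = u given H_1^B = xb;
  b2 xb u v = probability of U_2^B = v given H_2^B = (xb,u).\<close>
record bob_strat =
  b1 :: "int \<Rightarrow> int \<Rightarrow> real"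
  b2 :: "int \<Rightarrow> int \<Rightarrow> int \<Rightarrow> real"

text \<open>Belief system: for each information set a distribution over the nodes in it.
  muA1 xa xb: Alice at H_1^A = xa, node (xa,xb).
  muB1 xb xa: Bob at H_1^B = xb, node (xa,xb).
  muA2 xa u xb: Alice at H_2^A = (xa,u), node (xa,xb,u).
  muB2 xb u xa: Bob at H_2^B = (xb,u), node (xa,xb,u).\<close>
record beliefs =
  muA1 :: "int \<Rightarrow> int \<Rightarrow> real"
  muB1 :: "int \<Rightarrow> int \<Rightarrow> real"
  muA2 :: "int \<Rightarrow> int \<Rightarrow> int \<Rightarrow> real"
  muB2 :: "int \<Rightarrow> int \<Rightarrow> int \<Rightarrow> real"

definition valid_alice :: "alice_strat \<Rightarrow> bool" where
  "valid_alice a \<longleftrightarrow> (\<forall>xa\<in>S1. \<forall>u\<in>S1. is_dist S2 (a xa u))"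

definition valid_bob :: "bob_strat \<Rightarrow> bool" where
  "valid_bob b \<longleftrightarrow> (\<forall>xb\<in>S1. is_dist S1 (b1 b xb)) \<and>
                    (\<forall>xb\<in>S1. \<forall>u\<in>S1. is_dist S2 (b2 b xb u))"

definition valid_beliefs :: "beliefs \<Rightarrow> bool" where
  "valid_beliefs \<mu> \<longleftrightarrow>
     (\<forall>xa\<in>S1. is_dist S1 (muA1 \<mu> xa)) \<and> (\<forall>xb\<in>S1. is_dist S1 (muB1 \<mu> xb)) \<and>
     (\<forall>xa\<in>S1. \<forall>u\<in>S1. is_dist S1 (muA2 \<mu> xa u)) \<and>
     (\<forall>xb\<in>S1. \<forall>u\<in>S1. is_dist S1 (muB2 \<mu> xb u))"

text \<open>Rewards (X_2 = X_1^B = xb).\<close>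
definition rA1 :: "int \<Rightarrow> real" where "rA1 u = (if u = -1 then -1 else 0)"
definition rA2 :: "int \<Rightarrow> int \<Rightarrow> real" where
  "rA2 xb va = (if va = xb \<or> va = 0 then 1 else 0)"
definition rB1 :: "int \<Rightarrow> real" where "rB1 u = (if u = -1 then 1/5 else 0)"
definition rB2 :: "int \<Rightarrow> int \<Rightarrow> real" where "rB2 va vb = (if va = vb then -1 else 0)"

definition stage2_A :: "alice_strat \<Rightarrow> bob_strat \<Rightarrow> int \<Rightarrow> int \<Rightarrow> int \<Rightarrow> real" where
  "stage2_A a b xa xb u = (\<Sum>va\<in>S2. \<Sum>vb\<in>S2. a xa u va * b2 b xb u vb * rA2 xb va)"
definition stage2_B :: "alice_strat \<Rightarrow> bob_strat \<Rightarrow> int \<Rightarrow> int \<Rightarrow> int \<Rightarrow> real" where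
  "stage2_B a b xa xb u = (\<Sum>va\<in>S2. \<Sum>vb\<in>S2. a xa u va * b2 b xb u vb * rB2 va vb)"

definition cont1_A :: "alice_strat \<Rightarrow> bob_strat \<Rightarrow> int \<Rightarrow> int \<Rightarrow> real" where
  "cont1_A a b xa xb = (\<Sum>u\<in>S1. b1 b xb u * (rA1 u + stage2_A a b xa xb u))"
definition cont1_B :: "alice_strat \<Rightarrow> bob_strat \<Rightarrow> int \<Rightarrow> int \<Rightarrow> real" where
  "cont1_B a b xa xb = (\<Sum>u\<in>S1. b1 b xb u * (rB1 u + stage2_B a b xa xb u))"

definition JA :: "alice_strat \<Rightarrow> bob_strat \<Rightarrow> real" where
  "JA a b = (\<Sum>xa\<in>S1. \<Sum>xb\<in>S1. 1/4 * cont1_A a b xa xb)"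
definition JB :: "alice_strat \<Rightarrow> bob_strat \<Rightarrow> real" where
  "JB a b = (\<Sum>xa\<in>S1. \<Sum>xb\<in>S1. 1/4 * cont1_B a b xa xb)"

definition seq_rational :: "alice_strat \<Rightarrow> bob_strat \<Rightarrow> beliefs \<Rightarrow> bool" where
  "seq_rational a b \<mu> \<longleftrightarrow>
    (\<forall>xa\<in>S1. \<forall>a'. valid_alice a' \<longrightarrow>
       (\<Sum>xb\<in>S1. muA1 \<mu> xa xb * cont1_A a' b xa xb) \<le> (\<Sum>xb\<in>S1. muA1 \<mu> xa xb * cont1_A a b xa xb)) \<and>
    (\<forall>xb\<in>S1. \<forall>b'. valid_bob b' \<longrightarrow>
       (\<Sum>xa\<in>S1. muB1 \<mu> xb xa * cont1_B a b' xa xb) \<le> (\<Sum>xa\<in>S1. muB1 \<mu> xb xa * cont1_B a b xa xb)) \<and>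
    (\<forall>xa\<in>S1. \<forall>u\<in>S1. \<forall>a'. valid_alice a' \<longrightarrow>
       (\<Sum>xb\<in>S1. muA2 \<mu> xa u xb * stage2_A a' b xa xb u) \<le> (\<Sum>xb\<in>S1. muA2 \<mu> xa u xb * stage2_A a b xa xb u)) \<and>
    (\<forall>xb\<in>S1. \<forall>u\<in>S1. \<forall>b'. valid_bob b' \<longrightarrow>
       (\<Sum>xa\<in>S1. muB2 \<mu> xb u xa * stage2_B a b' xa xb u) \<le> (\<Sum>xa\<in>S1. muB2 \<mu> xb u xa * stage2_B a b xa xb u))"

definition node1_prob :: "int \<Rightarrow> int \<Rightarrow> real" where "node1_prob xa xb = 1/4"
definition node2_prob :: "bob_strat \<Rightarrow> int \<Rightarrow> int \<Rightarrow> int \<Rightarrow> real" where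
  "node2_prob b xa xb u = 1/4 * b1 b xb u"

definition bayes_consistent :: "bob_strat \<Rightarrow> beliefs \<Rightarrow> bool" where
  "bayes_consistent b \<mu> \<longleftrightarrow>
    (\<forall>xa\<in>S1. (\<Sum>xb'\<in>S1. node1_prob xa xb') > 0 \<longrightarrow>
       (\<forall>xb\<in>S1. muA1 \<mu> xa xb = node1_prob xa xb / (\<Sum>xb'\<in>S1. node1_prob xa xb'))) \<and>
    (\<forall>xb\<in>S1. (\<Sum>xa'\<in>S1. node1_prob xa' xb) > 0 \<longrightarrow>
       (\<forall>xa\<in>S1. muB1 \<mu> xb xa = node1_prob xa xb / (\<Sum>xa'\<in>S1. node1_prob xa' xb))) \<and>
    (\<forall>xa\<in>S1. \<forall>u\<in>S1. (\<Sum>xb'\<in>S1. node2_prob b xa xb' u) > 0 \<longrightarrow>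
       (\<forall>xb\<in>S1. muA2 \<mu> xa u xb = node2_prob b xa xb u / (\<Sum>xb'\<in>S1. node2_prob b xa xb' u))) \<and>
    (\<forall>xb\<in>S1. \<forall>u\<in>S1. (\<Sum>xa'\<in>S1. node2_prob b xa' xb u) > 0 \<longrightarrow>
       (\<forall>xa\<in>S1. muB2 \<mu> xb u xa = node2_prob b xa xb u / (\<Sum>xa'\<in>S1. node2_prob b xa' xb u)))"

definition wPBE :: "alice_strat \<Rightarrow> bob_strat \<Rightarrow> beliefs \<Rightarrow> bool" where
  "wPBE a b \<mu> \<longleftrightarrow> valid_alice a \<and> valid_bob b \<and> valid_beliefs \<mu> \<and>
                   seq_rational a b \<mu> \<and> bayes_consistent b \<mu>"

text \<open>K-based: Alice's stage-2 mixed action depends on (X_1^A, U_1^B) only through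
  K_2^A = U_1^B.  Bob's K_t^B = H_t^B imposes no restriction.\<close>
definition K_based :: "alice_strat \<Rightarrow> bool" where
  "K_based a \<longleftrightarrow> (\<forall>xa\<in>S1. \<forall>xa'\<in>S1. \<forall>u\<in>S1. \<forall>v\<in>S2. a xa u v = a xa' u v)"

end

theory Submission
  imports Defs
begin

lemma sumS1[simp]: "(\<Sum>x\<in>S1. f x) = f (-1) + f 1"
  by (simp add: S1_def)
lemma sumS2[simp]: "(\<Sum>x\<in>S2. f x) = f (-1) + f 0 + f 1"
  by (simp add: S2_def add.assoc)
lemma cardS1[simp]: "card S1 = 2"
  by (simp add: S1_def)
lemma memS1[simp]: "x \<in> S1 \<longleftrightarrow> x = -1 \<or> x = 1"
  by (auto simp: S1_def)
lemma memS2[simp]: "x \<in> S2 \<longleftrightarrow> x = -1 \<or> x = 0 \<or> x = 1"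
  by (auto simp: S2_def)

lemma dist1: "is_dist S1 p \<longleftrightarrow> 0 \<le> p (-1) \<and> 0 \<le> p 1 \<and> p (-1) + p 1 = 1"
  by (auto simp: is_dist_def)
lemma dist2: "is_dist S2 p \<longleftrightarrow> 0 \<le> p (-1) \<and> 0 \<le> p 0 \<and> 0 \<le> p 1 \<and> p (-1) + p 0 + p 1 = 1"
  by (auto simp: is_dist_def)

lemma s2A_eq:
  assumes "valid_bob b" "xb \<in> S1" "u \<in> S1"
  shows "stage2_A a b xa xb u = a xa u 0 + a xa u xb"
proof -
  have "b2 b xb u (-1) + b2 b xb u 0 + b2 b xb u 1 = 1"
    using assms unfolding valid_bob_def dist2 by auto
  then show ?thesis using assms(2)
    unfolding stage2_A_def rA2_def
    by (auto simp: algebra_simps simp flip: distrib_left)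
qed

lemma s2B_eq: "stage2_B a b xa xb u = -(\<Sum>v\<in>S2. a xa u v * b2 b xb u v)"
  unfolding stage2_B_def rB2_def by simp

lemma s2A_le:
  assumes "valid_alice a" "valid_bob b" "xa \<in> S1" "xb \<in> S1" "u \<in> S1"
  shows "stage2_A a b xa xb u \<le> 1"
proof -
  have "0 \<le> a xa u (-1)" "0 \<le> a xa u 0" "0 \<le> a xa u 1" "a xa u (-1) + a xa u 0 + a xa u 1 = 1"
    using assms unfolding valid_alice_def dist2 by auto
  then show ?thesis using s2A_eq[OF assms(2,4,5)] assms(4) by auto
qed

lemma s2B_le:
  assumes "valid_alice a" "valid_bob b" "xa \<in> S1" "xb \<in> S1" "u \<in> S1"
  shows "stage2_B a b xa xb u \<le> 0"
proof -
  have "0 \<le> a xa u (-1)" "0 \<le> a xa u 0" "0 \<le> a xa u 1"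
    using assms unfolding valid_alice_def dist2 by auto
  moreover have "0 \<le> b2 b xb u (-1)" "0 \<le> b2 b xb u 0" "0 \<le> b2 b xb u 1"
    using assms unfolding valid_bob_def dist2 by auto
  ultimately have "0 \<le> a xa u (-1) * b2 b xb u (-1)" "0 \<le> a xa u 0 * b2 b xb u 0"
      "0 \<le> a xa u 1 * b2 b xb u 1" by (simp_all add: mult_nonneg_nonneg)
  then show ?thesis unfolding s2B_eq by simp
qed

lemma alice_support:
  assumes w: "wPBE a b \<mu>" and xa: "xa \<in> S1" and u: "u \<in> S1"
  shows "a xa u 1 = 0 \<or> a xa u (-1) = 0"
proof -
  have va: "valid_alice a" and vb: "valid_bob b" and vm: "valid_beliefs \<mu>"
    and sr: "seq_rational a b \<mu>" using w unfolding wPBE_def by auto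
  define a' where "a' = (\<lambda>x w v. if x = xa \<and> w = u then (if v = 0 then 1 else 0) else a x w v :: real)"
  have va': "valid_alice a'" using va unfolding valid_alice_def a'_def dist2 by auto
  have "(\<Sum>xb\<in>S1. muA2 \<mu> xa u xb * stage2_A a' b xa xb u)
     \<le> (\<Sum>xb\<in>S1. muA2 \<mu> xa u xb * stage2_A a b xa xb u)"
    using sr va' xa u unfolding seq_rational_def by blast
  note base = this
  then have ineq: "muA2 \<mu> xa u (-1) + muA2 \<mu> xa u 1 \<le>
      muA2 \<mu> xa u (-1) * (a xa u 0 + a xa u (-1)) + muA2 \<mu> xa u 1 * (a xa u 0 + a xa u 1)"
  proof -
    have "\<And>y. y \<in> S1 \<Longrightarrow> stage2_A a' b xa y u = 1"
      using s2A_eq[OF vb _ u, of _ a' xa] by (auto simp: a'_def)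
    moreover have "\<And>y. y \<in> S1 \<Longrightarrow> stage2_A a b xa y u = a xa u 0 + a xa u y"
      using s2A_eq[OF vb _ u] by blast
    ultimately show ?thesis using base by simp
  qed
  have m: "0 \<le> muA2 \<mu> xa u (-1)" "0 \<le> muA2 \<mu> xa u 1" "muA2 \<mu> xa u (-1) + muA2 \<mu> xa u 1 = 1"
    using vm xa u unfolding valid_beliefs_def dist1 by auto
  have p: "0 \<le> a xa u (-1)" "0 \<le> a xa u 0" "0 \<le> a xa u 1" "a xa u (-1) + a xa u 0 + a xa u 1 = 1"
    using va xa u unfolding valid_alice_def dist2 by auto
  have e: "muA2 \<mu> xa u (-1) * a xa u 1 + muA2 \<mu> xa u 1 * a xa u (-1) \<le> 0"
  proof -
    have e1: "a xa u 0 + a xa u (-1) = 1 - a xa u 1" and e2: "a xa u 0 + a xa u 1 = 1 - a xa u (-1)" using p by auto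
    then have "muA2 \<mu> xa u (-1) + muA2 \<mu> xa u 1 \<le>
      muA2 \<mu> xa u (-1) * (1 - a xa u 1) + muA2 \<mu> xa u 1 * (1 - a xa u (-1))"
      using ineq by (simp only: e1 e2)
    then show ?thesis by (simp add: algebra_simps)
  qed
  have z1: "muA2 \<mu> xa u (-1) * a xa u 1 = 0" and z2: "muA2 \<mu> xa u 1 * a xa u (-1) = 0"
    using e m p by (smt (verit) mult_nonneg_nonneg)+
  show ?thesis
  proof (rule ccontr)
    assume "\<not> ?thesis"
    then have "muA2 \<mu> xa u (-1) = 0" "muA2 \<mu> xa u 1 = 0" using z1 z2 by auto
    then show False using m by simp
  qed
qed

lemma bob_stage2_zero:
  assumes w: "wPBE a b \<mu>" and K: "K_based a" and xa: "xa \<in> S1" and xb: "xb \<in> S1" and u: "u \<in> S1"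
  shows "stage2_B a b xa xb u = 0"
proof -
  have va: "valid_alice a" and vb: "valid_bob b" and vm: "valid_beliefs \<mu>"
    and sr: "seq_rational a b \<mu>" using w unfolding wPBE_def by auto
  have Ka: "\<And>x v. x \<in> S1 \<Longrightarrow> v \<in> S2 \<Longrightarrow> a x u v = a 1 u v"
  proof -
    fix x v assume "x \<in> S1" "v \<in> S2"
    moreover have "(1::int) \<in> S1" by simp
    ultimately show "a x u v = a 1 u v" using K u unfolding K_based_def by blast
  qed
  have sB: "\<And>x c. x \<in> S1 \<Longrightarrow> stage2_B a c x xb u = stage2_B a c 1 xb u"
  proof -
    fix x c assume x: "x \<in> S1"
    have "a x u (-1) = a 1 u (-1)" "a x u 0 = a 1 u 0" "a x u 1 = a 1 u 1" using Ka[OF x] by auto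
    then show "stage2_B a c x xb u = stage2_B a c 1 xb u" unfolding s2B_eq by simp
  qed
  define v0 :: int where "v0 = (if a 1 u 1 = 0 then 1 else -1)"
  have v0S: "v0 \<in> S2" unfolding v0_def by auto
  have av0: "a 1 u v0 = 0" using alice_support[OF w _ u, of 1] unfolding v0_def by auto
  define b' where "b' = b\<lparr>b2 := (\<lambda>y w v. if y = xb \<and> w = u then (if v = v0 then 1 else 0) else b2 b y w v)\<rparr>"
  have vb': "valid_bob b'" using vb v0S unfolding valid_bob_def b'_def dist2 by auto
  have s': "stage2_B a b' 1 xb u = 0"
    unfolding s2B_eq b'_def using av0 v0S by (auto simp: v0_def)
  have "(\<Sum>x\<in>S1. muB2 \<mu> xb u x * stage2_B a b' x xb u)
     \<le> (\<Sum>x\<in>S1. muB2 \<mu> xb u x * stage2_B a b x xb u)"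
    using sr vb' xb u unfolding seq_rational_def by blast
  moreover have "muB2 \<mu> xb u (-1) + muB2 \<mu> xb u 1 = 1"
    using vm xb u unfolding valid_beliefs_def dist1 by auto
  ultimately have "0 \<le> stage2_B a b 1 xb u"
    using sB[of "-1" b] sB[of "-1" b'] s' by (simp add: distrib_right[symmetric])
  moreover have "stage2_B a b 1 xb u \<le> 0" using s2B_le[OF va vb _ xb u] by simp
  ultimately show ?thesis using sB[OF xa] by simp
qed

lemma bob_stage1:
  assumes w: "wPBE a b \<mu>" and K: "K_based a" and xb: "xb \<in> S1"
  shows "b1 b xb 1 = 0"
proof -
  have va: "valid_alice a" and vb: "valid_bob b" and vm: "valid_beliefs \<mu>"
    and sr: "seq_rational a b \<mu>" using w unfolding wPBE_def by auto
  define b' where "b' = b\<lparr>b1 := (\<lambda>y w. if y = xb then (if w = -1 then 1 else 0) else b1 b y w)\<rparr>"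
  have vb': "valid_bob b'" using vb unfolding valid_bob_def b'_def dist1 by auto
  have z: "\<And>x (c::bob_strat) u. x \<in> S1 \<Longrightarrow> u \<in> S1 \<Longrightarrow> b2 c = b2 b \<Longrightarrow> stage2_B a c x xb u = 0"
  proof -
    fix x u and c :: bob_strat assume "x \<in> S1" "u \<in> S1" "b2 c = b2 b"
    then have "stage2_B a c x xb u = stage2_B a b x xb u" unfolding stage2_B_def by simp
    then show "stage2_B a c x xb u = 0" using bob_stage2_zero[OF w K \<open>x \<in> S1\<close> xb \<open>u \<in> S1\<close>] by simp
  qed
  have c': "\<And>x. x \<in> S1 \<Longrightarrow> cont1_B a b' x xb = 1/5"
    unfolding cont1_B_def using z[of _ "-1" b'] z[of _ 1 b'] by (simp add: b'_def rB1_def)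
  have c: "\<And>x. x \<in> S1 \<Longrightarrow> cont1_B a b x xb = b1 b xb (-1) / 5"
    unfolding cont1_B_def using z[of _ "-1" b] z[of _ 1 b] by (simp add: rB1_def)
  have "(\<Sum>x\<in>S1. muB1 \<mu> xb x * cont1_B a b' x xb) \<le> (\<Sum>x\<in>S1. muB1 \<mu> xb x * cont1_B a b x xb)"
    using sr vb' xb unfolding seq_rational_def by blast
  moreover have "muB1 \<mu> xb (-1) + muB1 \<mu> xb 1 = 1"
    using vm xb unfolding valid_beliefs_def dist1 by auto
  moreover note c c'
  ultimately have h: "muB1 \<mu> xb (- 1) / 5 + muB1 \<mu> xb 1 / 5
      \<le> muB1 \<mu> xb (- 1) * b1 b xb (- 1) / 5 + muB1 \<mu> xb 1 * b1 b xb (- 1) / 5"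
    and msum: "muB1 \<mu> xb (-1) + muB1 \<mu> xb 1 = 1" by simp_all
  from h have "(muB1 \<mu> xb (- 1) + muB1 \<mu> xb 1) / 5 \<le> (muB1 \<mu> xb (- 1) + muB1 \<mu> xb 1) * b1 b xb (- 1) / 5"
    by (simp only: add_divide_distrib distrib_right)
  then have "1/5 \<le> b1 b xb (-1) / 5" using msum by simp
  moreover have "0 \<le> b1 b xb 1" "b1 b xb (-1) + b1 b xb 1 = 1"
    using vb xb unfolding valid_bob_def dist1 by auto
  ultimately show ?thesis by simp
qed

lemma Kbased_JA:
  assumes w: "wPBE a b \<mu>" and K: "K_based a"
  shows "JA a b \<le> 0"
proof -
  have va: "valid_alice a" and vb: "valid_bob b"
    using w unfolding wPBE_def by auto
  have "\<And>x y. x \<in> S1 \<Longrightarrow> y \<in> S1 \<Longrightarrow> cont1_A a b x y \<le> 0"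
  proof -
    fix x y assume x: "x \<in> S1" and y: "y \<in> S1"
    have "b1 b y 1 = 0" using bob_stage1[OF w K y] .
    moreover have "b1 b y (-1) + b1 b y 1 = 1" using vb y unfolding valid_bob_def dist1 by auto
    ultimately have "cont1_A a b x y = -1 + stage2_A a b x y (-1)"
      unfolding cont1_A_def by (simp add: rA1_def)
    then show "cont1_A a b x y \<le> 0" using s2A_le[OF va vb x y, of "-1"] by simp
  qed
  then have "cont1_A a b (-1) (-1) \<le> 0" "cont1_A a b (-1) 1 \<le> 0"
    "cont1_A a b 1 (-1) \<le> 0" "cont1_A a b 1 1 \<le> 0" by auto
  then show ?thesis unfolding JA_def by simp
qed


definition wa :: alice_strat where
  "wa = (\<lambda>xa u v. if u = 1 then (if v = 0 then 1 else 0)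
                   else if v = 0 then 1/3 else if v = xa then 2/3 else 0)"
definition wb :: bob_strat where
  "wb = \<lparr>b1 = (\<lambda>xb u. if u = 1 then 1 else 0), b2 = (\<lambda>xb u v. if v = 1 then 1 else 0)\<rparr>"
definition wm :: beliefs where
  "wm = \<lparr>muA1 = (\<lambda>_ _. 1/2), muB1 = (\<lambda>_ _. 1/2),
         muA2 = (\<lambda>xa u xb. if u = 1 then 1/2 else if xb = xa then 1 else 0),
         muB2 = (\<lambda>_ _ _. 1/2)\<rparr>"

lemma va_wa: "valid_alice wa"
  unfolding valid_alice_def wa_def dist2 by auto
lemma vb_wb: "valid_bob wb"
  unfolding valid_bob_def wb_def dist2 dist1 by auto
lemma vm_wm: "valid_beliefs wm"
  unfolding valid_beliefs_def wm_def dist1 by auto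

lemma key:
  assumes "valid_bob c" "xb \<in> S1"
  shows "stage2_B wa c 1 xb (-1) + stage2_B wa c (-1) xb (-1) = -2/3"
proof -
  have "b2 c xb (-1) (-1) + b2 c xb (-1) 0 + b2 c xb (-1) 1 = 1"
    using assms unfolding valid_bob_def dist2 by auto
  then show ?thesis unfolding s2B_eq by (simp add: wa_def)
qed

lemma wA1:
  assumes "valid_alice a'" "xa \<in> S1"
  shows "(\<Sum>xb\<in>S1. muA1 wm xa xb * cont1_A a' wb xa xb) \<le> (\<Sum>xb\<in>S1. muA1 wm xa xb * cont1_A wa wb xa xb)"
proof -
  have c: "\<And>a xb. cont1_A a wb xa xb = stage2_A a wb xa xb 1"
    unfolding cont1_A_def by (simp add: wb_def rA1_def)
  have "\<And>xb. xb \<in> S1 \<Longrightarrow> stage2_A wa wb xa xb 1 = 1"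
    using s2A_eq[OF vb_wb] by (auto simp: wa_def)
  moreover have "\<And>xb. xb \<in> S1 \<Longrightarrow> stage2_A a' wb xa xb 1 \<le> 1"
    using s2A_le[OF assms(1) vb_wb assms(2)] by simp
  then have "stage2_A a' wb xa 1 1 \<le> 1" "stage2_A a' wb xa (-1) 1 \<le> 1" by auto
  ultimately show ?thesis unfolding c by (simp add: wm_def)
qed

lemma wA2:
  assumes "valid_alice a'" "xa \<in> S1" "u \<in> S1"
  shows "(\<Sum>xb\<in>S1. muA2 wm xa u xb * stage2_A a' wb xa xb u) \<le> (\<Sum>xb\<in>S1. muA2 wm xa u xb * stage2_A wa wb xa xb u)"
proof -
  have e: "\<And>xb. xb \<in> S1 \<Longrightarrow> stage2_A wa wb xa xb u = wa xa u 0 + wa xa u xb"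
    using s2A_eq[OF vb_wb _ assms(3)] by blast
  have l: "\<And>xb. xb \<in> S1 \<Longrightarrow> stage2_A a' wb xa xb u \<le> 1"
    using s2A_le[OF assms(1) vb_wb assms(2) _ assms(3)] by blast
  have l1: "stage2_A a' wb xa 1 u \<le> 1" and l2: "stage2_A a' wb xa (-1) u \<le> 1" using l by auto
  show ?thesis
    using assms(2,3) e[of 1] e[of "-1"] l1 l2 by (auto simp: wm_def wa_def)
qed

lemma wB1:
  assumes "valid_bob b'" "xb \<in> S1"
  shows "(\<Sum>xa\<in>S1. muB1 wm xb xa * cont1_B wa b' xa xb) \<le> (\<Sum>xa\<in>S1. muB1 wm xb xa * cont1_B wa wb xa xb)"
proof -
  have r: "(\<Sum>xa\<in>S1. muB1 wm xb xa * cont1_B wa wb xa xb) = 0"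
    unfolding cont1_B_def s2B_eq by (simp add: wm_def wa_def wb_def rB1_def)
  have p: "0 \<le> b1 b' xb (-1)" "0 \<le> b1 b' xb 1"
    using assms unfolding valid_bob_def dist1 by auto
  have n1: "stage2_B wa b' 1 xb 1 \<le> 0" "stage2_B wa b' (-1) xb 1 \<le> 0"
    using s2B_le[OF va_wa assms(1) _ assms(2)] by auto
  have k: "stage2_B wa b' 1 xb (-1) + stage2_B wa b' (-1) xb (-1) = -2/3" using key[OF assms] .
  have "(\<Sum>xa\<in>S1. muB1 wm xb xa * cont1_B wa b' xa xb)
     = (b1 b' xb (-1) * (2/5 + (stage2_B wa b' 1 xb (-1) + stage2_B wa b' (-1) xb (-1)))
        + b1 b' xb 1 * (stage2_B wa b' 1 xb 1 + stage2_B wa b' (-1) xb 1)) / 2"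
    unfolding cont1_B_def by (simp add: wm_def rB1_def algebra_simps)
  also have "\<dots> = (b1 b' xb (-1) * (2/5 - 2/3)
        + b1 b' xb 1 * (stage2_B wa b' 1 xb 1 + stage2_B wa b' (-1) xb 1)) / 2"
    using k by simp
  also have "\<dots> \<le> 0"
  proof -
    have "b1 b' xb (-1) * (2/5 - 2/3) \<le> 0" using p by simp
    moreover have "b1 b' xb 1 * (stage2_B wa b' 1 xb 1 + stage2_B wa b' (-1) xb 1) \<le> 0"
      using p n1 by (simp add: mult_nonneg_nonpos)
    ultimately show ?thesis by simp
  qed
  finally show ?thesis using r by simp
qed

lemma wB2:
  assumes "valid_bob b'" "xb \<in> S1" "u \<in> S1"
  shows "(\<Sum>xa\<in>S1. muB2 wm xb u xa * stage2_B wa b' xa xb u) \<le> (\<Sum>xa\<in>S1. muB2 wm xb u xa * stage2_B wa wb xa xb u)"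
proof (cases "u = 1")
  case True
  have n1: "stage2_B wa b' 1 xb 1 \<le> 0" "stage2_B wa b' (-1) xb 1 \<le> 0"
    using s2B_le[OF va_wa assms(1) _ assms(2)] by auto
  have "stage2_B wa wb xa xb 1 = 0" for xa
    unfolding s2B_eq by (simp add: wa_def wb_def)
  then show ?thesis using True n1 by (simp add: wm_def)
next
  case False
  then have u: "u = -1" using assms(3) by simp
  show ?thesis using key[OF assms(1,2)] key[OF vb_wb assms(2)] u
    by (simp add: wm_def)
qed

lemma w_seq: "seq_rational wa wb wm"
  unfolding seq_rational_def using wA1 wA2 wB1 wB2 by blast

lemma w_bayes: "bayes_consistent wb wm"
  unfolding bayes_consistent_def by (auto simp: wm_def wb_def node1_prob_def node2_prob_def)

lemma w_wPBE: "wPBE wa wb wm"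
  unfolding wPBE_def using va_wa vb_wb vm_wm w_seq w_bayes by blast

lemma w_JA: "JA wa wb = 1"
  unfolding JA_def cont1_A_def stage2_A_def by (simp add: wa_def wb_def rA1_def rA2_def)

theorem proposition1:
  shows "{(JA a b, JB a b) | a b \<mu>. wPBE a b \<mu> \<and> K_based a}
         \<subset> {(JA a b, JB a b) | a b \<mu>. wPBE a b \<mu>}"
proof
  show "{(JA a b, JB a b) | a b \<mu>. wPBE a b \<mu> \<and> K_based a}
         \<subseteq> {(JA a b, JB a b) | a b \<mu>. wPBE a b \<mu>}" by blast
next
  have "(JA wa wb, JB wa wb) \<in> {(JA a b, JB a b) | a b \<mu>. wPBE a b \<mu>}"
    using w_wPBE by blast
  moreover have "(JA wa wb, JB wa wb) \<notin> {(JA a b, JB a b) | a b \<mu>. wPBE a b \<mu> \<and> K_based a}"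
  proof
    assume "(JA wa wb, JB wa wb) \<in> {(JA a b, JB a b) | a b \<mu>. wPBE a b \<mu> \<and> K_based a}"
    then obtain a b \<mu> where "wPBE a b \<mu>" "K_based a" "JA wa wb = JA a b" by blast
    then show False using Kbased_JA w_JA by fastforce
  qed
  ultimately show "{(JA a b, JB a b) | a b \<mu>. wPBE a b \<mu> \<and> K_based a}
         \<noteq> {(JA a b, JB a b) | a b \<mu>. wPBE a b \<mu>}" by blast
qed

end
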